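(* Let $n\ge 2$ and let $f:(\mathbb{C}^n,0)\to(\mathbb{C},0)$ be a holomorphic function germ with $f(0)=0$ having an isolated critical point at the origin, with Milnor number $\mu$ and Tjurina number $\tau$. If $\mu/\tau>n-1$, then $f^{n-1}\notin J_f$.
   Context: Let $S=\mathbb{C}\{x_1,\dots,x_n\}$ be the ring of convergent power series, $J_f=(\partial f/\partial x_1,\dots,\partial f/\partial x_n)\subset S$ the Jacobian ideal, $\mu=\dim_{\mathbb{C}}S/J_f$ and $\tau=\dim_{\mathbb{C}}S/(J_f,f)$. *)

theory Defs
  imports "HOL-Analysis.Analysis"
begin

definition holo_near0 :: "(complex^'n \<Rightarrow> complex) \<Rightarrow> bool" where
  "holo_near0 f \<longleftrightarrow> (\<exists>r>0. \<forall>z\<in>ball 0 r. \<exists>L. (f has_derivative L) (at z) \<and>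
       (\<forall>c v. L (c *s v) = c * L v))"

definition cpartial :: "'n::finite \<Rightarrow> (complex^'n \<Rightarrow> complex) \<Rightarrow> complex^'n \<Rightarrow> complex" where
  "cpartial i f z = frechet_derivative f (at z) (axis i 1)"

definition germ_in_ideal :: "(complex^'n \<Rightarrow> complex) set \<Rightarrow> (complex^'n \<Rightarrow> complex) \<Rightarrow> bool" where
  "germ_in_ideal G h \<longleftrightarrow> (\<exists>a. (\<forall>g\<in>G. holo_near0 (a g)) \<and>
       eventually (\<lambda>z. h z = (\<Sum>g\<in>G. a g z * g z)) (nhds 0))"

text \<open>dim_C (S / (G)): the least size of a family of germs spanning S modulo the ideal (G).\<close>
definition germ_colength :: "(complex^'n \<Rightarrow> complex) set \<Rightarrow> nat" where
  "germ_colength G = (LEAST k. \<exists>B. finite B \<and> card B = k \<and> (\<forall>b\<in>B. holo_near0 b) \<and>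
       (\<forall>h. holo_near0 h \<longrightarrow> (\<exists>c. germ_in_ideal G (\<lambda>z. h z - (\<Sum>b\<in>B. c b * b z)))))"

definition jacobian_gens :: "(complex^'n::finite \<Rightarrow> complex) \<Rightarrow> (complex^'n \<Rightarrow> complex) set" where
  "jacobian_gens f = range (\<lambda>i. cpartial i f)"

definition milnor_number :: "(complex^'n::finite \<Rightarrow> complex) \<Rightarrow> nat" where
  "milnor_number f = germ_colength (jacobian_gens f)"

definition tjurina_number :: "(complex^'n::finite \<Rightarrow> complex) \<Rightarrow> nat" where
  "tjurina_number f = germ_colength (insert f (jacobian_gens f))"

definition isolated_critical_point0 :: "(complex^'n::finite \<Rightarrow> complex) \<Rightarrow> bool" where
  "isolated_critical_point0 f \<longleftrightarrow> (\<forall>i. cpartial i f 0 = 0) \<and>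
     (\<exists>r>0. \<forall>z\<in>ball 0 r. (\<forall>i. cpartial i f z = 0) \<longrightarrow> z = 0)"

end

theory Submission
  imports Defs
begin

lemma holo_const: "holo_near0 (\<lambda>z. k)"
  unfolding holo_near0_def
  by (rule exI[of _ 1]) (auto intro!: exI[of _ "\<lambda>_. 0"])

lemma holo_add:
  fixes f g :: "complex^'n \<Rightarrow> complex"
  assumes "holo_near0 f" "holo_near0 g" shows "holo_near0 (\<lambda>z. f z + g z)"
proof -
  obtain r1 where r1: "r1 > 0" "\<forall>z\<in>ball 0 r1. \<exists>L. (f has_derivative L) (at z) \<and> (\<forall>c v. L (c *s v) = c * L v)"
    using assms(1) unfolding holo_near0_def by blast
  obtain r2 where r2: "r2 > 0" "\<forall>z\<in>ball 0 r2. \<exists>L. (g has_derivative L) (at z) \<and> (\<forall>c v. L (c *s v) = c * L v)"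
    using assms(2) unfolding holo_near0_def by blast
  show ?thesis unfolding holo_near0_def
  proof (intro exI[of _ "min r1 r2"] conjI ballI)
    show "min r1 r2 > 0" using r1 r2 by simp
    fix z :: "complex^'n" assume z: "z \<in> ball 0 (min r1 r2)"
    then obtain L1 L2 where L1: "(f has_derivative L1) (at z)" "\<forall>c v. L1 (c *s v) = c * L1 v"
      and L2: "(g has_derivative L2) (at z)" "\<forall>c v. L2 (c *s v) = c * L2 v"
      using r1(2)[rule_format, of z] r2(2)[rule_format, of z] z by auto
    show "\<exists>L. ((\<lambda>z. f z + g z) has_derivative L) (at z) \<and> (\<forall>c v. L (c *s v) = c * L v)"
      by (rule exI[of _ "\<lambda>h. L1 h + L2 h"]) (use L1 L2 in \<open>auto intro!: derivative_eq_intros simp: algebra_simps\<close>)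
  qed
qed

lemma holo_mult:
  fixes f g :: "complex^'n \<Rightarrow> complex"
  assumes "holo_near0 f" "holo_near0 g" shows "holo_near0 (\<lambda>z. f z * g z)"
proof -
  obtain r1 where r1: "r1 > 0" "\<forall>z\<in>ball 0 r1. \<exists>L. (f has_derivative L) (at z) \<and> (\<forall>c v. L (c *s v) = c * L v)"
    using assms(1) unfolding holo_near0_def by blast
  obtain r2 where r2: "r2 > 0" "\<forall>z\<in>ball 0 r2. \<exists>L. (g has_derivative L) (at z) \<and> (\<forall>c v. L (c *s v) = c * L v)"
    using assms(2) unfolding holo_near0_def by blast
  show ?thesis unfolding holo_near0_def
  proof (intro exI[of _ "min r1 r2"] conjI ballI)
    show "min r1 r2 > 0" using r1 r2 by simp
    fix z :: "complex^'n" assume z: "z \<in> ball 0 (min r1 r2)"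
    then obtain L1 L2 where L1: "(f has_derivative L1) (at z)" "\<forall>c v. L1 (c *s v) = c * L1 v"
      and L2: "(g has_derivative L2) (at z)" "\<forall>c v. L2 (c *s v) = c * L2 v"
      using r1(2)[rule_format, of z] r2(2)[rule_format, of z] z by auto
    show "\<exists>L. ((\<lambda>z. f z * g z) has_derivative L) (at z) \<and> (\<forall>c v. L (c *s v) = c * L v)"
      by (rule exI[of _ "\<lambda>h. f z * L2 h + L1 h * g z"])
         (use L1 L2 has_derivative_mult[OF L1(1) L2(1)] in \<open>auto simp: algebra_simps\<close>)
  qed
qed

lemma holo_pow: "holo_near0 f \<Longrightarrow> holo_near0 (\<lambda>z. f z ^ m)"
  by (induction m) (auto intro: holo_const holo_mult)

lemma holo_sum: "finite S \<Longrightarrow> (\<And>s. s \<in> S \<Longrightarrow> holo_near0 (F s)) \<Longrightarrow> holo_near0 (\<lambda>z. \<Sum>s\<in>S. F s z)"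
  by (induction S rule: finite_induct) (auto intro: holo_const holo_add)

lemma ideal_mono:
  assumes "finite J" "germ_in_ideal J h"
  shows "germ_in_ideal (insert f J) h"
proof (cases "f \<in> J")
  case True then show ?thesis using assms by (simp add: insert_absorb)
next
  case False
  obtain a where a: "\<forall>g\<in>J. holo_near0 (a g)" "eventually (\<lambda>z. h z = (\<Sum>g\<in>J. a g z * g z)) (nhds 0)"
    using assms(2) unfolding germ_in_ideal_def by blast
  have s: "(\<Sum>g\<in>J. (a(f := (\<lambda>_. 0))) g z * g z) = (\<Sum>g\<in>J. a g z * g z)" for z
    using False by (intro sum.cong) auto
  show ?thesis unfolding germ_in_ideal_def
    by (rule exI[of _ "a(f := (\<lambda>_. 0))"])
       (use a False assms(1) s in \<open>auto simp: holo_const\<close>)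
qed

lemma ideal_ins:
  assumes "finite J" "germ_in_ideal (insert f J) h"
  shows "\<exists>a a1. (\<forall>g\<in>J. holo_near0 (a g)) \<and> holo_near0 a1 \<and>
     eventually (\<lambda>z. h z = (\<Sum>g\<in>J. a g z * g z) + a1 z * f z) (nhds 0)"
proof (cases "f \<in> J")
  case True
  then obtain a where a: "\<forall>g\<in>J. holo_near0 (a g)" "eventually (\<lambda>z. h z = (\<Sum>g\<in>J. a g z * g z)) (nhds 0)"
    using assms(2) unfolding germ_in_ideal_def by (auto simp: insert_absorb)
  then show ?thesis by (intro exI[of _ a] exI[of _ "\<lambda>_. 0"]) (auto simp: holo_const)
next
  case False
  obtain a where a: "\<forall>g\<in>insert f J. holo_near0 (a g)" "eventually (\<lambda>z. h z = (\<Sum>g\<in>insert f J. a g z * g z)) (nhds 0)"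
    using assms(2) unfolding germ_in_ideal_def by blast
  show ?thesis
    by (intro exI[of _ a] exI[of _ "a f"]) (use a False assms(1) in \<open>auto simp: add.commute\<close>)
qed

lemma span_step:
  fixes f :: "complex^'n \<Rightarrow> complex"
  assumes J: "finite J" and hf: "holo_near0 f" and B: "finite B"
    and span: "\<forall>h. holo_near0 h \<longrightarrow> (\<exists>c. germ_in_ideal (insert f J) (\<lambda>z. h z - (\<Sum>b\<in>B. c b * b z)))"
  shows "holo_near0 h \<Longrightarrow> \<exists>c a a0. (\<forall>g\<in>J. holo_near0 (a g)) \<and> holo_near0 a0 \<and>
     eventually (\<lambda>z. h z - (\<Sum>k\<in>{..<m}\<times>B. c k * (f z ^ fst k * snd k z))
         = (\<Sum>g\<in>J. a g z * g z) + a0 z * f z ^ m) (nhds 0)"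
proof (induction m)
  case 0
  then show ?case
    by (intro exI[of _ "\<lambda>_. 0"] exI[of _ "\<lambda>_ _. 0"] exI[of _ h]) (auto simp: holo_const)
next
  case (Suc m)
  then obtain c a a0 where ca: "\<forall>g\<in>J. holo_near0 (a g)" "holo_near0 a0"
     "eventually (\<lambda>z. h z - (\<Sum>k\<in>{..<m}\<times>B. c k * (f z ^ fst k * snd k z))
         = (\<Sum>g\<in>J. a g z * g z) + a0 z * f z ^ m) (nhds 0)" by blast
  obtain d where d: "germ_in_ideal (insert f J) (\<lambda>z. a0 z - (\<Sum>b\<in>B. d b * b z))"
    using span ca(2) by blast
  obtain a' a1 where a': "\<forall>g\<in>J. holo_near0 (a' g)" "holo_near0 a1"
    "eventually (\<lambda>z. a0 z - (\<Sum>b\<in>B. d b * b z) = (\<Sum>g\<in>J. a' g z * g z) + a1 z * f z) (nhds 0)"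
    using ideal_ins[OF J d] by blast
  define c' where "c' = (\<lambda>k. if fst k = m then d (snd k) else c k)"
  have setq: "{..<Suc m} \<times> B = Pair m ` B \<union> {..<m} \<times> B" by auto
  have sumq: "(\<Sum>k\<in>{..<Suc m}\<times>B. c' k * (f z ^ fst k * snd k z))
     = f z ^ m * (\<Sum>b\<in>B. d b * b z) + (\<Sum>k\<in>{..<m}\<times>B. c k * (f z ^ fst k * snd k z))" for z
  proof -
    have "(\<Sum>k\<in>{..<Suc m}\<times>B. c' k * (f z ^ fst k * snd k z))
      = (\<Sum>k\<in>Pair m ` B. c' k * (f z ^ fst k * snd k z)) + (\<Sum>k\<in>{..<m}\<times>B. c' k * (f z ^ fst k * snd k z))"
      unfolding setq using B by (intro sum.union_disjoint) auto
    also have "(\<Sum>k\<in>Pair m ` B. c' k * (f z ^ fst k * snd k z)) = (\<Sum>b\<in>B. d b * (f z ^ m * b z))"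
      by (subst sum.reindex) (auto simp: inj_on_def c'_def)
    also have "\<dots> = f z ^ m * (\<Sum>b\<in>B. d b * b z)"
      by (simp add: sum_distrib_left algebra_simps)
    also have "(\<Sum>k\<in>{..<m}\<times>B. c' k * (f z ^ fst k * snd k z)) = (\<Sum>k\<in>{..<m}\<times>B. c k * (f z ^ fst k * snd k z))"
      by (intro sum.cong) (auto simp: c'_def)
    finally show ?thesis .
  qed
  show ?case
  proof (intro exI[of _ c'] exI[of _ "\<lambda>g z. a g z + f z ^ m * a' g z"] exI[of _ a1] conjI ballI)
    show "holo_near0 a1" by fact
    fix g assume "g \<in> J"
    then show "holo_near0 (\<lambda>z. a g z + f z ^ m * a' g z)"
      using ca(1) a'(1) by (auto intro!: holo_add holo_mult holo_pow hf)
  next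
    show "eventually (\<lambda>z. h z - (\<Sum>k\<in>{..<Suc m}\<times>B. c' k * (f z ^ fst k * snd k z))
         = (\<Sum>g\<in>J. (a g z + f z ^ m * a' g z) * g z) + a1 z * f z ^ Suc m) (nhds 0)"
      using ca(3) a'(3)
    proof eventually_elim
      case (elim z)
      have e1: "a0 z = (\<Sum>b\<in>B. d b * b z) + (\<Sum>g\<in>J. a' g z * g z) + a1 z * f z"
        using elim(2) by (simp add: algebra_simps)
      have "h z - (\<Sum>k\<in>{..<Suc m}\<times>B. c' k * (f z ^ fst k * snd k z))
         = (\<Sum>g\<in>J. a g z * g z) + a0 z * f z ^ m - f z ^ m * (\<Sum>b\<in>B. d b * b z)"
        using elim(1) unfolding sumq by (simp add: algebra_simps)
      also have "\<dots> = (\<Sum>g\<in>J. a g z * g z) + f z ^ m * (\<Sum>g\<in>J. a' g z * g z) + a1 z * f z ^ Suc m"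
        unfolding e1 by (simp add: algebra_simps)
      also have "\<dots> = (\<Sum>g\<in>J. (a g z + f z ^ m * a' g z) * g z) + a1 z * f z ^ Suc m"
        by (simp add: sum_distrib_left sum.distrib algebra_simps)
      finally show ?case .
    qed
  qed
qed


lemma span_J:
  fixes f :: "complex^'n \<Rightarrow> complex"
  assumes J: "finite J" and hf: "holo_near0 f" and B: "finite B" and hB: "\<forall>b\<in>B. holo_near0 b"
    and span: "\<forall>h. holo_near0 h \<longrightarrow> (\<exists>c. germ_in_ideal (insert f J) (\<lambda>z. h z - (\<Sum>b\<in>B. c b * b z)))"
    and hN: "germ_in_ideal J (\<lambda>z. f z ^ N)"
  shows "\<exists>B'. finite B' \<and> card B' = card B' \<and> card B' \<le> N * card B \<and> (\<forall>b\<in>B'. holo_near0 b) \<and>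
     (\<forall>h. holo_near0 h \<longrightarrow> (\<exists>c. germ_in_ideal J (\<lambda>z. h z - (\<Sum>b\<in>B'. c b * b z))))"
proof -
  define I where "I = {..<N} \<times> B"
  define \<phi> where "\<phi> = (\<lambda>k z. f z ^ fst k * (snd k :: complex^'n \<Rightarrow> complex) z)"
  have fI: "finite I" using B by (simp add: I_def)
  obtain e where e: "\<forall>g\<in>J. holo_near0 (e g)" "eventually (\<lambda>z. f z ^ N = (\<Sum>g\<in>J. e g z * g z)) (nhds 0)"
    using hN unfolding germ_in_ideal_def by blast
  show ?thesis
  proof (intro exI[of _ "\<phi> ` I"] conjI allI impI ballI)
    show "finite (\<phi> ` I)" using fI by simp
    show "card (\<phi> ` I) = card (\<phi> ` I)" ..
    show "card (\<phi> ` I) \<le> N * card B"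
      using card_image_le[OF fI, of \<phi>] by (simp add: I_def card_cartesian_product)
    fix b assume "b \<in> \<phi> ` I"
    then show "holo_near0 b" using hB by (auto simp: I_def \<phi>_def intro!: holo_mult holo_pow hf)
  next
    fix h :: "complex^'n \<Rightarrow> complex" assume hh: "holo_near0 h"
    obtain c a a0 where ca: "\<forall>g\<in>J. holo_near0 (a g)" "holo_near0 a0"
     "eventually (\<lambda>z. h z - (\<Sum>k\<in>{..<N}\<times>B. c k * (f z ^ fst k * snd k z))
         = (\<Sum>g\<in>J. a g z * g z) + a0 z * f z ^ N) (nhds 0)"
      using span_step[OF J hf B span hh, of N] by blast
    define c'' where "c'' = (\<lambda>b. \<Sum>k\<in>{k\<in>I. \<phi> k = b}. c k)"
    have sq: "(\<Sum>b\<in>\<phi> ` I. c'' b * b z) = (\<Sum>k\<in>I. c k * \<phi> k z)" for z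
    proof -
      have "(\<Sum>k\<in>I. c k * \<phi> k z) = (\<Sum>b\<in>\<phi> ` I. \<Sum>k\<in>{k\<in>I. \<phi> k = b}. c k * \<phi> k z)"
        by (rule sum.image_gen[OF fI])
      also have "\<dots> = (\<Sum>b\<in>\<phi> ` I. c'' b * b z)"
        unfolding c''_def by (intro sum.cong refl) (auto simp: sum_distrib_right)
      finally show ?thesis by simp
    qed
    show "\<exists>c. germ_in_ideal J (\<lambda>z. h z - (\<Sum>b\<in>\<phi> ` I. c b * b z))"
      unfolding germ_in_ideal_def
    proof (intro exI[of _ c''] exI[of _ "\<lambda>g z. a g z + a0 z * e g z"] conjI ballI)
      fix g assume "g \<in> J" then show "holo_near0 (\<lambda>z. a g z + a0 z * e g z)"
        using ca e by (auto intro!: holo_add holo_mult)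
    next
      show "eventually (\<lambda>z. h z - (\<Sum>b\<in>\<phi> ` I. c'' b * b z) = (\<Sum>g\<in>J. (a g z + a0 z * e g z) * g z)) (nhds 0)"
        using ca(3) e(2)
      proof eventually_elim
        case (elim z)
        have "h z - (\<Sum>b\<in>\<phi> ` I. c'' b * b z) = (\<Sum>g\<in>J. a g z * g z) + a0 z * (\<Sum>g\<in>J. e g z * g z)"
          using elim unfolding sq by (simp add: I_def \<phi>_def)
        also have "\<dots> = (\<Sum>g\<in>J. (a g z + a0 z * e g z) * g z)"
          by (simp add: sum_distrib_left sum.distrib algebra_simps)
        finally show ?case .
      qed
    qed
  qed
qed


theorem mainTheorem3:
  fixes f :: "complex^'n::finite \<Rightarrow> complex"
  assumes "CARD('n) \<ge> 2"
    and "holo_near0 f"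
    and "f 0 = 0"
    and "isolated_critical_point0 f"
    and "real (milnor_number f) / real (tjurina_number f) > real (CARD('n) - 1)"
  shows "\<not> germ_in_ideal (jacobian_gens f) (\<lambda>z. f z ^ (CARD('n) - 1))"
proof
  assume hN: "germ_in_ideal (jacobian_gens f) (\<lambda>z. f z ^ (CARD('n) - 1))"
  define J where "J = jacobian_gens f"
  define N where "N = CARD('n) - 1"
  have fJ: "finite J" unfolding J_def jacobian_gens_def by simp
  define P where "P = (\<lambda>G k. \<exists>B. finite B \<and> card B = k \<and> (\<forall>b\<in>B. holo_near0 b) \<and>
       (\<forall>h. holo_near0 h \<longrightarrow> (\<exists>c. germ_in_ideal G (\<lambda>z. h (z::complex^'n) - (\<Sum>b\<in>B. c b * b z)))))"
  have mu: "milnor_number f = (LEAST k. P J k)"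
    unfolding milnor_number_def germ_colength_def P_def J_def ..
  have tau: "tjurina_number f = (LEAST k. P (insert f J) k)"
    unfolding tjurina_number_def germ_colength_def P_def J_def ..
  have N1: "N \<ge> 1" using assms(1) by (simp add: N_def)
  have le: "milnor_number f \<le> N * tjurina_number f"
  proof (cases "\<exists>k. P (insert f J) k")
    case True
    then have "P (insert f J) (tjurina_number f)" unfolding tau by (rule LeastI_ex)
    then obtain B where B: "finite B" "card B = tjurina_number f" "\<forall>b\<in>B. holo_near0 b"
      "\<forall>h. holo_near0 h \<longrightarrow> (\<exists>c. germ_in_ideal (insert f J) (\<lambda>z. h z - (\<Sum>b\<in>B. c b * b z)))"
      unfolding P_def by blast
    obtain B' where B': "finite B'" "card B' \<le> N * card B" "\<forall>b\<in>B'. holo_near0 b"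
      "\<forall>h. holo_near0 h \<longrightarrow> (\<exists>c. germ_in_ideal J (\<lambda>z. h z - (\<Sum>b\<in>B'. c b * b z)))"
      using span_J[OF fJ assms(2) B(1) B(3) B(4), of N] hN unfolding J_def N_def by blast
    have "P J (card B')" unfolding P_def using B' by blast
    then have "milnor_number f \<le> card B'" unfolding mu by (rule Least_le)
    then show ?thesis using B' B by simp
  next
    case False
    have "\<not> P J k" for k
    proof
      assume "P J k"
      then obtain B where B: "finite B" "card B = k" "\<forall>b\<in>B. holo_near0 b"
        "\<forall>h. holo_near0 h \<longrightarrow> (\<exists>c. germ_in_ideal J (\<lambda>z. h z - (\<Sum>b\<in>B. c b * b z)))"
        unfolding P_def by blast
      have "\<forall>h. holo_near0 h \<longrightarrow> (\<exists>c. germ_in_ideal (insert f J) (\<lambda>z. h z - (\<Sum>b\<in>B. c b * b z)))"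
        using B(4) ideal_mono[OF fJ] by blast
      then have "P (insert f J) k" unfolding P_def using B(1-3) by blast
      then show False using False by blast
    qed
    then have "(\<lambda>k. P J k) = (\<lambda>k. P (insert f J) k)" using False by blast
    then have "milnor_number f = tjurina_number f" unfolding mu tau by simp
    then show ?thesis using N1 by simp
  qed
  have "real (milnor_number f) / real (tjurina_number f) \<le> real N"
  proof (cases "tjurina_number f = 0")
    case True then show ?thesis by simp
  next
    case False
    have "real (milnor_number f) \<le> real N * real (tjurina_number f)"
      using le by (metis of_nat_le_iff of_nat_mult)
    then show ?thesis using False by (simp add: divide_le_eq)
  qed
  then show False using assms(5) unfolding N_def by simp
qed

end
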